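(* Consider the multi-sender unicast index-coding instance with $N=4$ messages, $K=2$ senders with $\mathcal S_1=\{1,2,3\}$, $\mathcal S_2=\{2,3,4\}$, link capacities $C_1=C_2=1$, and receiver side information $\mathcal A_1=\{4\}$, $\mathcal A_2=\{1,3\}$, $\mathcal A_3=\{1,2\}$, $\mathcal A_4=\{2,3\}$. Its capacity region is $$\mathcal C=\{(R_1,R_2,R_3,R_4)\in\mathbb R_+^4: R_1\le1,\ R_4\le1,\ R_1+R_2\le2,\ R_1+R_3\le2,\ R_2+R_4\le2,\ R_3+R_4\le2\}.$$
   Context: Model. $N$ independent messages $M_1,\dots,M_N$, $M_j$ uniform on $[1:2^{nR_j}]$ ($n$ the block length). Sender $k$ knows the messages $M_i$, $i\in\mathcal S_k$, and sends an index $L_k=f_k((M_i)_{i\in\mathcal S_k})\in[1:2^{nC_k})=\{1,\dots,2^{\lfloor nC_k\rfloor}\}$ over a noiseless broadcast link reaching all receivers. Receiver $j$ knows $M_i$, $i\in\mathcal A_j$, and must output an estimate $\hat M_j=g_j(L_1,\dots,L_K,(M_i)_{i\in\mathcal A_j})$ of $M_j$. A rate tuple is achievable if there exist such codes with $\Pr[(\hat M_1,\dots,\hat M_N)\ne(M_1,\dots,M_N)]\to0$ as $n\to\infty$; the capacity region $\mathcal C$ is the closure of the set of achievable rate tuples. *)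

theory Defs
  imports "HOL-Analysis.Analysis"
begin

text \<open>Messages are indexed by 1..N, senders by 1..K.  A message tuple is a function
  m :: nat \<Rightarrow> nat (only the values on 1..N matter; we use extensional tuples).\<close>

text \<open>Message set of message j at block length n: [1:2^(n R_j)], read as {1..ceil(2^(n R_j))}.\<close>
definition msg_size :: "nat \<Rightarrow> real \<Rightarrow> nat" where
  "msg_size n r = nat \<lceil>2 powr (real n * r)\<rceil>"

definition msg_space :: "nat \<Rightarrow> (nat \<Rightarrow> real) \<Rightarrow> nat \<Rightarrow> (nat \<Rightarrow> nat) set" where
  "msg_space N R n = PiE {1..N} (\<lambda>j. {1..msg_size n (R j)})"

text \<open>Index set of sender k: [1:2^(n C_k)) = {1,...,2^floor(n C_k)}.\<close>
definition link_size :: "nat \<Rightarrow> real \<Rightarrow> nat" where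
  "link_size n c = 2 ^ nat \<lfloor>real n * c\<rfloor>"

definition sent :: "nat \<Rightarrow> (nat \<Rightarrow> (nat \<Rightarrow> nat) \<Rightarrow> nat) \<Rightarrow> (nat \<Rightarrow> nat) \<Rightarrow> nat \<Rightarrow> nat" where
  "sent K f m = (\<lambda>k. if k \<in> {1..K} then f k m else 0)"

definition valid_code ::
  "nat \<Rightarrow> nat \<Rightarrow> (nat \<Rightarrow> nat set) \<Rightarrow> (nat \<Rightarrow> nat set) \<Rightarrow> (nat \<Rightarrow> real) \<Rightarrow> (nat \<Rightarrow> real) \<Rightarrow> nat
   \<Rightarrow> (nat \<Rightarrow> (nat \<Rightarrow> nat) \<Rightarrow> nat) \<Rightarrow> (nat \<Rightarrow> (nat \<Rightarrow> nat) \<Rightarrow> (nat \<Rightarrow> nat) \<Rightarrow> nat) \<Rightarrow> bool" where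
  "valid_code N K S A C R n f g \<longleftrightarrow>
     (\<forall>k\<in>{1..K}. \<forall>m\<in>msg_space N R n. f k m \<in> {1..link_size n (C k)}) \<and>
     (\<forall>k\<in>{1..K}. \<forall>m\<in>msg_space N R n. \<forall>m'\<in>msg_space N R n.
         (\<forall>i\<in>S k. m i = m' i) \<longrightarrow> f k m = f k m') \<and>
     (\<forall>j\<in>{1..N}. \<forall>L. \<forall>m\<in>msg_space N R n. \<forall>m'\<in>msg_space N R n.
         (\<forall>i\<in>A j. m i = m' i) \<longrightarrow> g j L m = g j L m')"

definition err_prob ::
  "nat \<Rightarrow> nat \<Rightarrow> (nat \<Rightarrow> real) \<Rightarrow> nat
   \<Rightarrow> (nat \<Rightarrow> (nat \<Rightarrow> nat) \<Rightarrow> nat) \<Rightarrow> (nat \<Rightarrow> (nat \<Rightarrow> nat) \<Rightarrow> (nat \<Rightarrow> nat) \<Rightarrow> nat) \<Rightarrow> real" where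
  "err_prob N K R n f g =
     real (card {m \<in> msg_space N R n. \<exists>j\<in>{1..N}. g j (sent K f m) m \<noteq> m j})
     / real (card (msg_space N R n))"

definition achievable ::
  "nat \<Rightarrow> nat \<Rightarrow> (nat \<Rightarrow> nat set) \<Rightarrow> (nat \<Rightarrow> nat set) \<Rightarrow> (nat \<Rightarrow> real) \<Rightarrow> (nat \<Rightarrow> real) \<Rightarrow> bool" where
  "achievable N K S A C R \<longleftrightarrow>
     (\<forall>j\<in>{1..N}. 0 \<le> R j) \<and>
     (\<exists>P :: nat \<Rightarrow> real. P \<longlonglongrightarrow> 0 \<and>
        (\<forall>n. \<exists>f g. valid_code N K S A C R n f g \<and> err_prob N K R n f g \<le> P n))"

definition S_ex :: "nat \<Rightarrow> nat set" where
  "S_ex k = (if k = 1 then {1,2,3} else if k = 2 then {2,3,4} else {})"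

definition A_ex :: "nat \<Rightarrow> nat set" where
  "A_ex j = (if j = 1 then {4} else if j = 2 then {1,3} else if j = 3 then {1,2}
             else if j = 4 then {2,3} else {})"

definition C_ex :: "nat \<Rightarrow> real" where
  "C_ex k = 1"

definition rate4 :: "real \<Rightarrow> real \<Rightarrow> real \<Rightarrow> real \<Rightarrow> nat \<Rightarrow> real" where
  "rate4 r1 r2 r3 r4 = (\<lambda>j. if j = 1 then r1 else if j = 2 then r2 else if j = 3 then r3
                            else if j = 4 then r4 else 0)"

definition capacity_region_ex :: "(real \<times> real \<times> real \<times> real) set" where
  "capacity_region_ex = closure {(r1, r2, r3, r4). achievable 4 2 S_ex A_ex C_ex (rate4 r1 r2 r3 r4)}"

end

theory Submission
  imports Defs
begin

lemma msg_size_ge1: "1 \<le> msg_size n r"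
proof -
  have "0 < 2 powr (real n * r)" by simp
  then have "1 \<le> \<lceil>2 powr (real n * r)\<rceil>" by (simp add: zero_less_ceiling)
  then show ?thesis unfolding msg_size_def by linarith
qed

lemma msg_size_pos: "0 < msg_size n r" using msg_size_ge1[of n r] by simp

lemma msg_size_lb: "2 powr (real n * r) \<le> real (msg_size n r)"
proof -
  have c: "0 < \<lceil>2 powr (real n * r)\<rceil>" by simp
  have "real (msg_size n r) = of_int \<lceil>2 powr (real n * r)\<rceil>" unfolding msg_size_def using c by simp
  then show ?thesis using le_of_int_ceiling[of "2 powr (real n * r)"] by linarith
qed

lemma msg_size_ub: "real (msg_size n r) \<le> 2 powr (real n * r) + 1"
proof -
  have c: "0 < \<lceil>2 powr (real n * r)\<rceil>" by simp
  have "real (msg_size n r) = of_int \<lceil>2 powr (real n * r)\<rceil>" unfolding msg_size_def using c by simp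
  then show ?thesis using of_int_ceiling_le_add_one[of "2 powr (real n * r)"] by linarith
qed

lemma link_size_1: "link_size n 1 = 2 ^ n"
  unfolding link_size_def by simp

lemma four_set: "{1..4::nat} = {1,2,3,4}" by auto

lemma msg_space_card: "card (msg_space 4 R n) =
   msg_size n (R 1) * msg_size n (R 2) * msg_size n (R 3) * msg_size n (R 4)"
  unfolding msg_space_def four_set by (simp add: card_PiE)

lemma msg_space_finite: "finite (msg_space 4 R n)"
  unfolding msg_space_def by (simp add: finite_PiE)

lemma msg_space_mem: "m \<in> msg_space 4 R n \<Longrightarrow> j \<in> {1..4} \<Longrightarrow> 1 \<le> m j \<and> m j \<le> msg_size n (R j)"
  unfolding msg_space_def by (auto simp: PiE_iff)

lemma msg_space_ext: "m \<in> msg_space 4 R n \<Longrightarrow> m' \<in> msg_space 4 R n \<Longrightarrow> (\<And>j. j \<in> {1..4} \<Longrightarrow> m j = m' j) \<Longrightarrow> m = m'"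
  unfolding msg_space_def by (rule PiE_ext)

lemma err_lower:
  fixes T :: "'b set" and \<phi> :: "(nat \<Rightarrow> nat) \<Rightarrow> 'b"
  assumes fin: "finite T" and inj: "inj_on \<phi> {m \<in> msg_space 4 R n. \<forall>j\<in>{1..4}. g j (sent 2 f m) m = m j}"
    and img: "\<phi> ` {m \<in> msg_space 4 R n. \<forall>j\<in>{1..4}. g j (sent 2 f m) m = m j} \<subseteq> T"
  shows "1 - real (card T) / real (card (msg_space 4 R n)) \<le> err_prob 4 2 R n f g"
proof -
  define M where "M = msg_space 4 R n"
  define G where "G = {m \<in> M. \<forall>j\<in>{1..4}. g j (sent 2 f m) m = m j}"
  define B where "B = {m \<in> M. \<exists>j\<in>{1..4}. g j (sent 2 f m) m \<noteq> m j}"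
  have fM: "finite M" unfolding M_def by (rule msg_space_finite)
  have pos: "0 < card M" unfolding M_def by (simp add: msg_space_card msg_size_pos)
  have GB: "G \<union> B = M" "G \<inter> B = {}" unfolding G_def B_def by blast+
  have fG: "finite G" "finite B" using GB fM by (metis finite_Un)+
  have cGB: "card G + card B = card M" using card_Un_disjoint[OF fG GB(2)] GB(1) by simp
  have "card G \<le> card T" using card_inj_on_le[OF inj img fin] unfolding G_def M_def .
  then have "real (card M) - real (card T) \<le> real (card B)" using cGB by linarith
  then have "(real (card M) - real (card T)) / real (card M) \<le> real (card B) / real (card M)"
    using pos by (simp add: divide_right_mono)
  moreover have "(real (card M) - real (card T)) / real (card M) = 1 - real (card T) / real (card M)"
    using pos by (simp add: diff_divide_distrib)
  ultimately show ?thesis unfolding err_prob_def B_def M_def by simp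
qed

lemma sent2_eq: assumes "f 1 m = f 1 m'" "f 2 m = f 2 m'" shows "sent 2 f m = sent 2 f m'"
proof -
  have "\<And>k. k \<in> {1..2::nat} \<Longrightarrow> k = 1 \<or> k = 2" by auto
  then show ?thesis unfolding sent_def fun_eq_iff by (metis assms)
qed

lemma card4: "card ({1..a::nat} \<times> {1..b::nat} \<times> {1..c::nat} \<times> {1..d::nat}) = a*b*c*d"
  by (simp add: card_cartesian_product)

lemma vc_range: "valid_code 4 2 S_ex A_ex C_ex R n f g \<Longrightarrow> k \<in> {1,2} \<Longrightarrow> m \<in> msg_space 4 R n
  \<Longrightarrow> f k m \<in> {1..2^n}"
proof -
  assume vc: "valid_code 4 2 S_ex A_ex C_ex R n f g" and k: "k \<in> {1,2}" and m: "m \<in> msg_space 4 R n"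
  have "\<forall>k\<in>{1..2}. \<forall>m\<in>msg_space 4 R n. f k m \<in> {1..link_size n (C_ex k)}"
    using vc unfolding valid_code_def by blast
  moreover have "k \<in> {1..2}" using k by auto
  ultimately have "f k m \<in> {1..link_size n (C_ex k)}" using m by blast
  then show ?thesis by (simp add: C_ex_def link_size_1)
qed

lemma vc_enc: "valid_code 4 2 S_ex A_ex C_ex R n f g \<Longrightarrow> k \<in> {1,2} \<Longrightarrow> m \<in> msg_space 4 R n
  \<Longrightarrow> m' \<in> msg_space 4 R n \<Longrightarrow> (\<forall>i\<in>S_ex k. m i = m' i) \<Longrightarrow> f k m = f k m'"
proof -
  assume vc: "valid_code 4 2 S_ex A_ex C_ex R n f g" and k: "k \<in> {1,2}" and m: "m \<in> msg_space 4 R n"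
    and m': "m' \<in> msg_space 4 R n" and e: "\<forall>i\<in>S_ex k. m i = m' i"
  have "\<forall>k\<in>{1..2}. \<forall>m\<in>msg_space 4 R n. \<forall>m'\<in>msg_space 4 R n. (\<forall>i\<in>S_ex k. m i = m' i) \<longrightarrow> f k m = f k m'"
    using vc unfolding valid_code_def by blast
  moreover have "k \<in> {1..2}" using k by auto
  ultimately show ?thesis using m m' e by blast
qed

lemma vc_dec: "valid_code 4 2 S_ex A_ex C_ex R n f g \<Longrightarrow> j \<in> {1..4} \<Longrightarrow> m \<in> msg_space 4 R n
  \<Longrightarrow> m' \<in> msg_space 4 R n \<Longrightarrow> (\<forall>i\<in>A_ex j. m i = m' i) \<Longrightarrow> g j L m = g j L m'"
  unfolding valid_code_def by blast

lemma ext4: "m \<in> msg_space 4 R n \<Longrightarrow> m' \<in> msg_space 4 R n \<Longrightarrow> m 1 = m' 1 \<Longrightarrow> m 2 = m' 2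
  \<Longrightarrow> m 3 = m' 3 \<Longrightarrow> m 4 = m' 4 \<Longrightarrow> m = m'"
proof -
  assume a: "m \<in> msg_space 4 R n" "m' \<in> msg_space 4 R n" "m 1 = m' 1" "m 2 = m' 2" "m 3 = m' 3" "m 4 = m' 4"
  have "\<And>j. j \<in> {1..4::nat} \<Longrightarrow> m j = m' j"
  proof -
    fix j :: nat assume "j \<in> {1..4}"
    then have "j = 1 \<or> j = 2 \<or> j = 3 \<or> j = 4" by auto
    then show "m j = m' j" using a by (elim disjE) simp_all
  qed
  then show ?thesis by (rule msg_space_ext[OF a(1) a(2)])
qed

lemma pw_bound2:
  assumes "2 powr (real n * r1) \<le> A" "2 powr (real n * r2) \<le> B"
  shows "(2^n*2^n)/(A*B) \<le> 2 powr (real n*(2 - r1 - r2))"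
proof -
  have pA: "0 < 2 powr (real n * r1)" "0 < 2 powr (real n * r2)" by simp_all
  have x: "real n*(2 - r1 - r2) = (real n + real n) - (real n * r1 + real n * r2)" by (simp add: algebra_simps)
  have e: "2 powr (real n*(2 - r1 - r2)) = (2^n*2^n) / (2 powr (real n * r1) * 2 powr (real n * r2))"
    unfolding x powr_diff powr_add by (simp add: powr_realpow)
  have "(2^n*2^n)/(A*B) \<le> (2^n*2^n) / (2 powr (real n * r1) * 2 powr (real n * r2))"
  proof -
    have A: "0 < A" "0 < B" using assms pA by linarith+
    have "2 powr (real n * r1) * 2 powr (real n * r2) \<le> A * B"
      using assms pA A by (intro mult_mono) auto
    moreover have "0 < 2 powr (real n * r1) * 2 powr (real n * r2)" using pA by simp
    ultimately show ?thesis using A by (intro divide_left_mono) (auto intro: mult_pos_pos)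
  qed
  then show ?thesis using e by simp
qed

lemma pw_bound1:
  assumes "2 powr (real n * r1) \<le> A"
  shows "2^n/A \<le> 2 powr (real n*(1 - r1))"
proof -
  have pA: "0 < 2 powr (real n * r1)" by simp_all
  have x: "real n*(1 - r1) = real n - real n * r1" by (simp add: algebra_simps)
  have e: "2 powr (real n*(1 - r1)) = 2^n / 2 powr (real n * r1)"
    unfolding x powr_diff by (simp add: powr_realpow)
  have "2^n/A \<le> 2^n / 2 powr (real n * r1)"
    by (rule frac_le) (simp_all add: pA assms)
  then show ?thesis using e by simp
qed

lemma conv_final:
  assumes ach: "achievable 4 2 S_ex A_ex C_ex R"
    and b: "\<And>n f g. valid_code 4 2 S_ex A_ex C_ex R n f g \<Longrightarrow> 1 - 2 powr (real n * a) \<le> err_prob 4 2 R n f g"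
    and a: "a < 0"
  shows False
proof -
  obtain P :: "nat \<Rightarrow> real" where P: "P \<longlonglongrightarrow> 0"
    and c: "\<forall>n. \<exists>f g. valid_code 4 2 S_ex A_ex C_ex R n f g \<and> err_prob 4 2 R n f g \<le> P n"
    using ach unfolding achievable_def by blast
  have le: "1 - 2 powr (real n * a) \<le> P n" for n
    using c b by (meson order_trans)
  have e: "2 powr (real n * a) = (2 powr a) ^ n" for n
    by (simp add: powr_powr[symmetric] powr_realpow mult.commute)
  have "(\<lambda>n. (2 powr a) ^ n) \<longlonglongrightarrow> 0"
    using a powr_less_one[of 2 a] by (intro LIMSEQ_power_zero) simp
  then have "(\<lambda>n. 1 - 2 powr (real n * a)) \<longlonglongrightarrow> 1 - 0"
    unfolding e by (intro tendsto_diff tendsto_const)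
  then have "1 - 0 \<le> (0::real)" using P le by (intro LIMSEQ_le[of _ _ P]) auto
  then show False by simp
qed

lemma conv1:
  assumes vc: "valid_code 4 2 S_ex A_ex C_ex R n f g"
  shows "1 - 2 powr (real n*(1 - R 1)) \<le> err_prob 4 2 R n f g"
proof -
  define M where "M = msg_space 4 R n"
  define G where "G = {m \<in> msg_space 4 R n. \<forall>j\<in>{1..4}. g j (sent 2 f m) m = m j}"
  define T where "T = {1..msg_size n (R 2)} \<times> {1..msg_size n (R 3)} \<times> {1..msg_size n (R 4)} \<times> {1..(2::nat)^n}"
  define \<phi> where "\<phi> = (\<lambda>m. (m 2, m 3, m 4, f 1 m))"
  have inj: "inj_on \<phi> G"
  proof (rule inj_onI)
    fix m m' assume mG: "m \<in> G" and mG': "m' \<in> G" and eq: "\<phi> m = \<phi> m'"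
    have mM: "m \<in> msg_space 4 R n" "m' \<in> msg_space 4 R n" using mG mG' unfolding G_def by auto
    have gm: "\<And>j. j \<in> {1..4} \<Longrightarrow> g j (sent 2 f m) m = m j" using mG unfolding G_def by auto
    have gm': "\<And>j. j \<in> {1..4} \<Longrightarrow> g j (sent 2 f m') m' = m' j" using mG' unfolding G_def by auto
    have e2: "m 2 = m' 2" using eq unfolding \<phi>_def by simp
    have e3: "m 3 = m' 3" using eq unfolding \<phi>_def by simp
    have e4: "m 4 = m' 4" using eq unfolding \<phi>_def by simp
    have f1: "f 1 m = f 1 m'" using eq unfolding \<phi>_def by simp
    have "\<forall>i\<in>S_ex 2. m i = m' i" using e2 e3 e4 unfolding S_ex_def by auto
    then have f2: "f 2 m = f 2 m'" using vc_enc[OF vc _ mM(1) mM(2)] by simp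
    have L: "sent 2 f m = sent 2 f m'" by (rule sent2_eq[of f m m', OF f1 f2])
    have e1: "m 1 = m' 1"
    proof -
      have "\<forall>i\<in>A_ex 1. m i = m' i" using e4 unfolding A_ex_def by auto
      then have "g 1 (sent 2 f m') m = g 1 (sent 2 f m') m'" using vc_dec[OF vc _ mM(1) mM(2)] by simp
      then show ?thesis using gm[of 1] gm'[of 1] L by simp
    qed
    show "m = m'" by (rule ext4[OF mM e1 e2 e3 e4])
  qed
  have img: "\<phi> ` G \<subseteq> T"
  proof
    fix x assume "x \<in> \<phi> ` G"
    then obtain m where mG: "m \<in> G" and x: "x = \<phi> m" by blast
    have mM: "m \<in> msg_space 4 R n" using mG unfolding G_def by auto
    show "x \<in> T" unfolding x \<phi>_def T_def using msg_space_mem[OF mM] vc_range[OF vc _ mM] by auto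
  qed
  have fin: "finite T" unfolding T_def by simp
  have lo: "1 - real (card T) / real (card (msg_space 4 R n)) \<le> err_prob 4 2 R n f g"
    by (rule err_lower[of T \<phi> R n g f, OF fin inj[unfolded G_def] img[unfolded G_def]])
  have pos: "\<And>j. 0 < real (msg_size n (R j))" using msg_size_pos by simp
  have rat: "real (card T) / real (card (msg_space 4 R n)) = 2^n / real (msg_size n (R 1))"
    unfolding T_def msg_space_card using pos by (simp add: card_cartesian_product field_simps)
  have "real (card T) / real (card (msg_space 4 R n)) \<le> 2 powr (real n*(1 - R 1))"
    unfolding rat by (intro pw_bound1 msg_size_lb)
  then show ?thesis using lo by linarith
qed

lemma conv4:
  assumes vc: "valid_code 4 2 S_ex A_ex C_ex R n f g"
  shows "1 - 2 powr (real n*(1 - R 4)) \<le> err_prob 4 2 R n f g"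
proof -
  define M where "M = msg_space 4 R n"
  define G where "G = {m \<in> msg_space 4 R n. \<forall>j\<in>{1..4}. g j (sent 2 f m) m = m j}"
  define T where "T = {1..msg_size n (R 1)} \<times> {1..msg_size n (R 2)} \<times> {1..msg_size n (R 3)} \<times> {1..(2::nat)^n}"
  define \<phi> where "\<phi> = (\<lambda>m. (m 1, m 2, m 3, f 2 m))"
  have inj: "inj_on \<phi> G"
  proof (rule inj_onI)
    fix m m' assume mG: "m \<in> G" and mG': "m' \<in> G" and eq: "\<phi> m = \<phi> m'"
    have mM: "m \<in> msg_space 4 R n" "m' \<in> msg_space 4 R n" using mG mG' unfolding G_def by auto
    have gm: "\<And>j. j \<in> {1..4} \<Longrightarrow> g j (sent 2 f m) m = m j" using mG unfolding G_def by auto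
    have gm': "\<And>j. j \<in> {1..4} \<Longrightarrow> g j (sent 2 f m') m' = m' j" using mG' unfolding G_def by auto
    have e1: "m 1 = m' 1" using eq unfolding \<phi>_def by simp
    have e2: "m 2 = m' 2" using eq unfolding \<phi>_def by simp
    have e3: "m 3 = m' 3" using eq unfolding \<phi>_def by simp
    have f2: "f 2 m = f 2 m'" using eq unfolding \<phi>_def by simp
    have "\<forall>i\<in>S_ex 1. m i = m' i" using e1 e2 e3 unfolding S_ex_def by auto
    then have f1: "f 1 m = f 1 m'" using vc_enc[OF vc _ mM(1) mM(2)] by simp
    have L: "sent 2 f m = sent 2 f m'" by (rule sent2_eq[of f m m', OF f1 f2])
    have e4: "m 4 = m' 4"
    proof -
      have "\<forall>i\<in>A_ex 4. m i = m' i" using e2 e3 unfolding A_ex_def by auto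
      then have "g 4 (sent 2 f m') m = g 4 (sent 2 f m') m'" using vc_dec[OF vc _ mM(1) mM(2)] by simp
      then show ?thesis using gm[of 4] gm'[of 4] L by simp
    qed
    show "m = m'" by (rule ext4[OF mM e1 e2 e3 e4])
  qed
  have img: "\<phi> ` G \<subseteq> T"
  proof
    fix x assume "x \<in> \<phi> ` G"
    then obtain m where mG: "m \<in> G" and x: "x = \<phi> m" by blast
    have mM: "m \<in> msg_space 4 R n" using mG unfolding G_def by auto
    show "x \<in> T" unfolding x \<phi>_def T_def using msg_space_mem[OF mM] vc_range[OF vc _ mM] by auto
  qed
  have fin: "finite T" unfolding T_def by simp
  have lo: "1 - real (card T) / real (card (msg_space 4 R n)) \<le> err_prob 4 2 R n f g"
    by (rule err_lower[of T \<phi> R n g f, OF fin inj[unfolded G_def] img[unfolded G_def]])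
  have pos: "\<And>j. 0 < real (msg_size n (R j))" using msg_size_pos by simp
  have rat: "real (card T) / real (card (msg_space 4 R n)) = 2^n / real (msg_size n (R 4))"
    unfolding T_def msg_space_card using pos by (simp add: card_cartesian_product field_simps)
  have "real (card T) / real (card (msg_space 4 R n)) \<le> 2 powr (real n*(1 - R 4))"
    unfolding rat by (intro pw_bound1 msg_size_lb)
  then show ?thesis using lo by linarith
qed

lemma conv12:
  assumes vc: "valid_code 4 2 S_ex A_ex C_ex R n f g"
  shows "1 - 2 powr (real n*(2 - R 1 - R 2)) \<le> err_prob 4 2 R n f g"
proof -
  define M where "M = msg_space 4 R n"
  define G where "G = {m \<in> msg_space 4 R n. \<forall>j\<in>{1..4}. g j (sent 2 f m) m = m j}"
  define T where "T = {1..msg_size n (R 3)} \<times> {1..msg_size n (R 4)} \<times> {1..(2::nat)^n} \<times> {1..(2::nat)^n}"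
  define \<phi> where "\<phi> = (\<lambda>m. (m 3, m 4, f 1 m, f 2 m))"
  have inj: "inj_on \<phi> G"
  proof (rule inj_onI)
    fix m m' assume mG: "m \<in> G" and mG': "m' \<in> G" and eq: "\<phi> m = \<phi> m'"
    have mM: "m \<in> msg_space 4 R n" "m' \<in> msg_space 4 R n" using mG mG' unfolding G_def by auto
    have gm: "\<And>j. j \<in> {1..4} \<Longrightarrow> g j (sent 2 f m) m = m j" using mG unfolding G_def by auto
    have gm': "\<And>j. j \<in> {1..4} \<Longrightarrow> g j (sent 2 f m') m' = m' j" using mG' unfolding G_def by auto
    have e3: "m 3 = m' 3" using eq unfolding \<phi>_def by simp
    have e4: "m 4 = m' 4" using eq unfolding \<phi>_def by simp
    have f1: "f 1 m = f 1 m'" using eq unfolding \<phi>_def by simp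
    have f2: "f 2 m = f 2 m'" using eq unfolding \<phi>_def by simp
    have L: "sent 2 f m = sent 2 f m'" by (rule sent2_eq[of f m m', OF f1 f2])
    have e1: "m 1 = m' 1"
    proof -
      have "\<forall>i\<in>A_ex 1. m i = m' i" using e4 unfolding A_ex_def by auto
      then have "g 1 (sent 2 f m') m = g 1 (sent 2 f m') m'" using vc_dec[OF vc _ mM(1) mM(2)] by simp
      then show ?thesis using gm[of 1] gm'[of 1] L by simp
    qed
    have e2: "m 2 = m' 2"
    proof -
      have "\<forall>i\<in>A_ex 2. m i = m' i" using e1 e3 unfolding A_ex_def by auto
      then have "g 2 (sent 2 f m') m = g 2 (sent 2 f m') m'" using vc_dec[OF vc _ mM(1) mM(2)] by simp
      then show ?thesis using gm[of 2] gm'[of 2] L by simp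
    qed
    show "m = m'" by (rule ext4[OF mM e1 e2 e3 e4])
  qed
  have img: "\<phi> ` G \<subseteq> T"
  proof
    fix x assume "x \<in> \<phi> ` G"
    then obtain m where mG: "m \<in> G" and x: "x = \<phi> m" by blast
    have mM: "m \<in> msg_space 4 R n" using mG unfolding G_def by auto
    show "x \<in> T" unfolding x \<phi>_def T_def using msg_space_mem[OF mM] vc_range[OF vc _ mM] by auto
  qed
  have fin: "finite T" unfolding T_def by simp
  have lo: "1 - real (card T) / real (card (msg_space 4 R n)) \<le> err_prob 4 2 R n f g"
    by (rule err_lower[of T \<phi> R n g f, OF fin inj[unfolded G_def] img[unfolded G_def]])
  have pos: "\<And>j. 0 < real (msg_size n (R j))" using msg_size_pos by simp
  have rat: "real (card T) / real (card (msg_space 4 R n)) = (2^n*2^n) / (real (msg_size n (R 1)) * real (msg_size n (R 2)))"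
    unfolding T_def msg_space_card using pos by (simp add: card_cartesian_product field_simps)
  have "real (card T) / real (card (msg_space 4 R n)) \<le> 2 powr (real n*(2 - R 1 - R 2))"
    unfolding rat by (intro pw_bound2 msg_size_lb)
  then show ?thesis using lo by linarith
qed

lemma conv13:
  assumes vc: "valid_code 4 2 S_ex A_ex C_ex R n f g"
  shows "1 - 2 powr (real n*(2 - R 1 - R 3)) \<le> err_prob 4 2 R n f g"
proof -
  define M where "M = msg_space 4 R n"
  define G where "G = {m \<in> msg_space 4 R n. \<forall>j\<in>{1..4}. g j (sent 2 f m) m = m j}"
  define T where "T = {1..msg_size n (R 2)} \<times> {1..msg_size n (R 4)} \<times> {1..(2::nat)^n} \<times> {1..(2::nat)^n}"
  define \<phi> where "\<phi> = (\<lambda>m. (m 2, m 4, f 1 m, f 2 m))"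
  have inj: "inj_on \<phi> G"
  proof (rule inj_onI)
    fix m m' assume mG: "m \<in> G" and mG': "m' \<in> G" and eq: "\<phi> m = \<phi> m'"
    have mM: "m \<in> msg_space 4 R n" "m' \<in> msg_space 4 R n" using mG mG' unfolding G_def by auto
    have gm: "\<And>j. j \<in> {1..4} \<Longrightarrow> g j (sent 2 f m) m = m j" using mG unfolding G_def by auto
    have gm': "\<And>j. j \<in> {1..4} \<Longrightarrow> g j (sent 2 f m') m' = m' j" using mG' unfolding G_def by auto
    have e2: "m 2 = m' 2" using eq unfolding \<phi>_def by simp
    have e4: "m 4 = m' 4" using eq unfolding \<phi>_def by simp
    have f1: "f 1 m = f 1 m'" using eq unfolding \<phi>_def by simp
    have f2: "f 2 m = f 2 m'" using eq unfolding \<phi>_def by simp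
    have L: "sent 2 f m = sent 2 f m'" by (rule sent2_eq[of f m m', OF f1 f2])
    have e1: "m 1 = m' 1"
    proof -
      have "\<forall>i\<in>A_ex 1. m i = m' i" using e4 unfolding A_ex_def by auto
      then have "g 1 (sent 2 f m') m = g 1 (sent 2 f m') m'" using vc_dec[OF vc _ mM(1) mM(2)] by simp
      then show ?thesis using gm[of 1] gm'[of 1] L by simp
    qed
    have e3: "m 3 = m' 3"
    proof -
      have "\<forall>i\<in>A_ex 3. m i = m' i" using e1 e2 unfolding A_ex_def by auto
      then have "g 3 (sent 2 f m') m = g 3 (sent 2 f m') m'" using vc_dec[OF vc _ mM(1) mM(2)] by simp
      then show ?thesis using gm[of 3] gm'[of 3] L by simp
    qed
    show "m = m'" by (rule ext4[OF mM e1 e2 e3 e4])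
  qed
  have img: "\<phi> ` G \<subseteq> T"
  proof
    fix x assume "x \<in> \<phi> ` G"
    then obtain m where mG: "m \<in> G" and x: "x = \<phi> m" by blast
    have mM: "m \<in> msg_space 4 R n" using mG unfolding G_def by auto
    show "x \<in> T" unfolding x \<phi>_def T_def using msg_space_mem[OF mM] vc_range[OF vc _ mM] by auto
  qed
  have fin: "finite T" unfolding T_def by simp
  have lo: "1 - real (card T) / real (card (msg_space 4 R n)) \<le> err_prob 4 2 R n f g"
    by (rule err_lower[of T \<phi> R n g f, OF fin inj[unfolded G_def] img[unfolded G_def]])
  have pos: "\<And>j. 0 < real (msg_size n (R j))" using msg_size_pos by simp
  have rat: "real (card T) / real (card (msg_space 4 R n)) = (2^n*2^n) / (real (msg_size n (R 1)) * real (msg_size n (R 3)))"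
    unfolding T_def msg_space_card using pos by (simp add: card_cartesian_product field_simps)
  have "real (card T) / real (card (msg_space 4 R n)) \<le> 2 powr (real n*(2 - R 1 - R 3))"
    unfolding rat by (intro pw_bound2 msg_size_lb)
  then show ?thesis using lo by linarith
qed

lemma conv24:
  assumes vc: "valid_code 4 2 S_ex A_ex C_ex R n f g"
  shows "1 - 2 powr (real n*(2 - R 2 - R 4)) \<le> err_prob 4 2 R n f g"
proof -
  define M where "M = msg_space 4 R n"
  define G where "G = {m \<in> msg_space 4 R n. \<forall>j\<in>{1..4}. g j (sent 2 f m) m = m j}"
  define T where "T = {1..msg_size n (R 1)} \<times> {1..msg_size n (R 3)} \<times> {1..(2::nat)^n} \<times> {1..(2::nat)^n}"
  define \<phi> where "\<phi> = (\<lambda>m. (m 1, m 3, f 1 m, f 2 m))"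
  have inj: "inj_on \<phi> G"
  proof (rule inj_onI)
    fix m m' assume mG: "m \<in> G" and mG': "m' \<in> G" and eq: "\<phi> m = \<phi> m'"
    have mM: "m \<in> msg_space 4 R n" "m' \<in> msg_space 4 R n" using mG mG' unfolding G_def by auto
    have gm: "\<And>j. j \<in> {1..4} \<Longrightarrow> g j (sent 2 f m) m = m j" using mG unfolding G_def by auto
    have gm': "\<And>j. j \<in> {1..4} \<Longrightarrow> g j (sent 2 f m') m' = m' j" using mG' unfolding G_def by auto
    have e1: "m 1 = m' 1" using eq unfolding \<phi>_def by simp
    have e3: "m 3 = m' 3" using eq unfolding \<phi>_def by simp
    have f1: "f 1 m = f 1 m'" using eq unfolding \<phi>_def by simp
    have f2: "f 2 m = f 2 m'" using eq unfolding \<phi>_def by simp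
    have L: "sent 2 f m = sent 2 f m'" by (rule sent2_eq[of f m m', OF f1 f2])
    have e2: "m 2 = m' 2"
    proof -
      have "\<forall>i\<in>A_ex 2. m i = m' i" using e1 e3 unfolding A_ex_def by auto
      then have "g 2 (sent 2 f m') m = g 2 (sent 2 f m') m'" using vc_dec[OF vc _ mM(1) mM(2)] by simp
      then show ?thesis using gm[of 2] gm'[of 2] L by simp
    qed
    have e4: "m 4 = m' 4"
    proof -
      have "\<forall>i\<in>A_ex 4. m i = m' i" using e2 e3 unfolding A_ex_def by auto
      then have "g 4 (sent 2 f m') m = g 4 (sent 2 f m') m'" using vc_dec[OF vc _ mM(1) mM(2)] by simp
      then show ?thesis using gm[of 4] gm'[of 4] L by simp
    qed
    show "m = m'" by (rule ext4[OF mM e1 e2 e3 e4])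
  qed
  have img: "\<phi> ` G \<subseteq> T"
  proof
    fix x assume "x \<in> \<phi> ` G"
    then obtain m where mG: "m \<in> G" and x: "x = \<phi> m" by blast
    have mM: "m \<in> msg_space 4 R n" using mG unfolding G_def by auto
    show "x \<in> T" unfolding x \<phi>_def T_def using msg_space_mem[OF mM] vc_range[OF vc _ mM] by auto
  qed
  have fin: "finite T" unfolding T_def by simp
  have lo: "1 - real (card T) / real (card (msg_space 4 R n)) \<le> err_prob 4 2 R n f g"
    by (rule err_lower[of T \<phi> R n g f, OF fin inj[unfolded G_def] img[unfolded G_def]])
  have pos: "\<And>j. 0 < real (msg_size n (R j))" using msg_size_pos by simp
  have rat: "real (card T) / real (card (msg_space 4 R n)) = (2^n*2^n) / (real (msg_size n (R 2)) * real (msg_size n (R 4)))"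
    unfolding T_def msg_space_card using pos by (simp add: card_cartesian_product field_simps)
  have "real (card T) / real (card (msg_space 4 R n)) \<le> 2 powr (real n*(2 - R 2 - R 4))"
    unfolding rat by (intro pw_bound2 msg_size_lb)
  then show ?thesis using lo by linarith
qed

lemma conv34:
  assumes vc: "valid_code 4 2 S_ex A_ex C_ex R n f g"
  shows "1 - 2 powr (real n*(2 - R 3 - R 4)) \<le> err_prob 4 2 R n f g"
proof -
  define M where "M = msg_space 4 R n"
  define G where "G = {m \<in> msg_space 4 R n. \<forall>j\<in>{1..4}. g j (sent 2 f m) m = m j}"
  define T where "T = {1..msg_size n (R 1)} \<times> {1..msg_size n (R 2)} \<times> {1..(2::nat)^n} \<times> {1..(2::nat)^n}"
  define \<phi> where "\<phi> = (\<lambda>m. (m 1, m 2, f 1 m, f 2 m))"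
  have inj: "inj_on \<phi> G"
  proof (rule inj_onI)
    fix m m' assume mG: "m \<in> G" and mG': "m' \<in> G" and eq: "\<phi> m = \<phi> m'"
    have mM: "m \<in> msg_space 4 R n" "m' \<in> msg_space 4 R n" using mG mG' unfolding G_def by auto
    have gm: "\<And>j. j \<in> {1..4} \<Longrightarrow> g j (sent 2 f m) m = m j" using mG unfolding G_def by auto
    have gm': "\<And>j. j \<in> {1..4} \<Longrightarrow> g j (sent 2 f m') m' = m' j" using mG' unfolding G_def by auto
    have e1: "m 1 = m' 1" using eq unfolding \<phi>_def by simp
    have e2: "m 2 = m' 2" using eq unfolding \<phi>_def by simp
    have f1: "f 1 m = f 1 m'" using eq unfolding \<phi>_def by simp
    have f2: "f 2 m = f 2 m'" using eq unfolding \<phi>_def by simp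
    have L: "sent 2 f m = sent 2 f m'" by (rule sent2_eq[of f m m', OF f1 f2])
    have e3: "m 3 = m' 3"
    proof -
      have "\<forall>i\<in>A_ex 3. m i = m' i" using e1 e2 unfolding A_ex_def by auto
      then have "g 3 (sent 2 f m') m = g 3 (sent 2 f m') m'" using vc_dec[OF vc _ mM(1) mM(2)] by simp
      then show ?thesis using gm[of 3] gm'[of 3] L by simp
    qed
    have e4: "m 4 = m' 4"
    proof -
      have "\<forall>i\<in>A_ex 4. m i = m' i" using e2 e3 unfolding A_ex_def by auto
      then have "g 4 (sent 2 f m') m = g 4 (sent 2 f m') m'" using vc_dec[OF vc _ mM(1) mM(2)] by simp
      then show ?thesis using gm[of 4] gm'[of 4] L by simp
    qed
    show "m = m'" by (rule ext4[OF mM e1 e2 e3 e4])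
  qed
  have img: "\<phi> ` G \<subseteq> T"
  proof
    fix x assume "x \<in> \<phi> ` G"
    then obtain m where mG: "m \<in> G" and x: "x = \<phi> m" by blast
    have mM: "m \<in> msg_space 4 R n" using mG unfolding G_def by auto
    show "x \<in> T" unfolding x \<phi>_def T_def using msg_space_mem[OF mM] vc_range[OF vc _ mM] by auto
  qed
  have fin: "finite T" unfolding T_def by simp
  have lo: "1 - real (card T) / real (card (msg_space 4 R n)) \<le> err_prob 4 2 R n f g"
    by (rule err_lower[of T \<phi> R n g f, OF fin inj[unfolded G_def] img[unfolded G_def]])
  have pos: "\<And>j. 0 < real (msg_size n (R j))" using msg_size_pos by simp
  have rat: "real (card T) / real (card (msg_space 4 R n)) = (2^n*2^n) / (real (msg_size n (R 3)) * real (msg_size n (R 4)))"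
    unfolding T_def msg_space_card using pos by (simp add: card_cartesian_product field_simps)
  have "real (card T) / real (card (msg_space 4 R n)) \<le> 2 powr (real n*(2 - R 3 - R 4))"
    unfolding rat by (intro pw_bound2 msg_size_lb)
  then show ?thesis using lo by linarith
qed

definition sv :: "nat \<Rightarrow> nat \<Rightarrow> (nat \<Rightarrow> nat) \<Rightarrow> int" where
  "sv s2 s3 m = (int (m 2) - 1 + (int (m 3) - 1)) mod int (max s2 s3)"

definition enc1 :: "nat \<Rightarrow> nat \<Rightarrow> nat \<Rightarrow> nat \<Rightarrow> nat \<Rightarrow> (nat \<Rightarrow> nat) \<Rightarrow> nat" where
  "enc1 s1 s2 s3 s4 W m = nat (1 + (int (m 1) - 1 + sv s2 s3 m mod int (min s1 s4)) mod int s1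
      + int s1 * ((sv s2 s3 m div int (min s1 s4)) mod int (W div s1)))"

definition enc2 :: "nat \<Rightarrow> nat \<Rightarrow> nat \<Rightarrow> nat \<Rightarrow> nat \<Rightarrow> (nat \<Rightarrow> nat) \<Rightarrow> nat" where
  "enc2 s1 s2 s3 s4 W m = nat (1 + (int (m 4) - 1 + sv s2 s3 m mod int (min s1 s4)) mod int s4
      + int s4 * (sv s2 s3 m div (int (min s1 s4) * int (W div s1))))"

definition dec1 :: "nat \<Rightarrow> nat \<Rightarrow> nat \<Rightarrow> nat \<Rightarrow> nat \<Rightarrow> (nat \<Rightarrow> nat) \<Rightarrow> (nat \<Rightarrow> nat) \<Rightarrow> nat" where
  "dec1 s1 s2 s3 s4 W L m = nat (1 + ((int (L 1) - 1) mod int s1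
      - ((int (L 2) - 1) mod int s4 - (int (m 4) - 1)) mod int s4) mod int s1)"

definition dec4 :: "nat \<Rightarrow> nat \<Rightarrow> nat \<Rightarrow> nat \<Rightarrow> nat \<Rightarrow> (nat \<Rightarrow> nat) \<Rightarrow> (nat \<Rightarrow> nat) \<Rightarrow> nat" where
  "dec4 s1 s2 s3 s4 W L m = nat (1 + ((int (L 2) - 1) mod int s4 - sv s2 s3 m mod int (min s1 s4)) mod int s4)"

definition rec_s :: "nat \<Rightarrow> nat \<Rightarrow> nat \<Rightarrow> nat \<Rightarrow> nat \<Rightarrow> (nat \<Rightarrow> nat) \<Rightarrow> nat \<Rightarrow> int" where
  "rec_s s1 s2 s3 s4 W L a1 = ((int (L 1) - 1) mod int s1 - (int a1 - 1)) mod int s1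
     + int (min s1 s4) * ((int (L 1) - 1) div int s1 + int (W div s1) * ((int (L 2) - 1) div int s4))"

definition dec2 :: "nat \<Rightarrow> nat \<Rightarrow> nat \<Rightarrow> nat \<Rightarrow> nat \<Rightarrow> (nat \<Rightarrow> nat) \<Rightarrow> (nat \<Rightarrow> nat) \<Rightarrow> nat" where
  "dec2 s1 s2 s3 s4 W L m = nat (1 + (rec_s s1 s2 s3 s4 W L (m 1) - (int (m 3) - 1)) mod int (max s2 s3))"

definition dec3 :: "nat \<Rightarrow> nat \<Rightarrow> nat \<Rightarrow> nat \<Rightarrow> nat \<Rightarrow> (nat \<Rightarrow> nat) \<Rightarrow> (nat \<Rightarrow> nat) \<Rightarrow> nat" where
  "dec3 s1 s2 s3 s4 W L m = nat (1 + (rec_s s1 s2 s3 s4 W L (m 1) - (int (m 2) - 1)) mod int (max s2 s3))"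

lemma mod_sub_cancel: "((a + x) mod s - a) mod s = (x::int) mod s"
  by (simp add: mod_diff_left_eq)
lemma mod_sub_cancel2: "((x + a) mod s - a) mod s = (x::int) mod s"
  by (simp add: mod_diff_left_eq)

lemma code_correct:
  fixes s1 s2 s3 s4 W :: nat and m :: "nat \<Rightarrow> nat"
  defines "X \<equiv> int (min s1 s4)" and "Y \<equiv> int (W div s1)" and "Z \<equiv> int (W div s4)"
    and "\<sigma> \<equiv> int (max s2 s3)"
  assumes cond: "max s2 s3 \<le> min s1 s4 * (W div s1) * (W div s4)"
    and m1: "1 \<le> m 1" "m 1 \<le> s1" and m2: "1 \<le> m 2" "m 2 \<le> s2"
    and m3: "1 \<le> m 3" "m 3 \<le> s3" and m4: "1 \<le> m 4" "m 4 \<le> s4"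
    and L1: "L 1 = enc1 s1 s2 s3 s4 W m" and L2: "L 2 = enc2 s1 s2 s3 s4 W m"
  shows "dec1 s1 s2 s3 s4 W L m = m 1" "dec2 s1 s2 s3 s4 W L m = m 2"
        "dec3 s1 s2 s3 s4 W L m = m 3" "dec4 s1 s2 s3 s4 W L m = m 4"
        "1 \<le> L 1" "L 1 \<le> W" "1 \<le> L 2" "L 2 \<le> W"
proof -
  define a1 where "a1 = int (m 1) - 1"
  define a2 where "a2 = int (m 2) - 1"
  define a3 where "a3 = int (m 3) - 1"
  define a4 where "a4 = int (m 4) - 1"
  have s1p: "0 < s1" and s4p: "0 < s4" and s2p: "0 < s2" and s3p: "0 < s3" using m1 m2 m3 m4 by auto
  have Xp: "0 < X" "X \<le> int s1" "X \<le> int s4" unfolding X_def using s1p s4p by auto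
  have sgp: "0 < \<sigma>" "int s2 \<le> \<sigma>" "int s3 \<le> \<sigma>" unfolding \<sigma>_def using s2p by auto
  have condi: "\<sigma> \<le> X * Y * Z" using cond unfolding X_def Y_def Z_def \<sigma>_def
    by (metis of_nat_le_iff of_nat_mult)
  have Yp: "0 < Y" "0 < Z"
  proof -
    have "0 < X * Y * Z" using condi sgp by linarith
    moreover have "0 \<le> Y" "0 \<le> Z" unfolding Y_def Z_def by auto
    ultimately show "0 < Y" "0 < Z" using Xp
      by (metis less_le mult_eq_0_iff)+
  qed
  have a_rng: "0 \<le> a1" "a1 < int s1" "0 \<le> a2" "a2 < int s2" "0 \<le> a3" "a3 < int s3" "0 \<le> a4" "a4 < int s4"
    unfolding a1_def a2_def a3_def a4_def using m1 m2 m3 m4 by auto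
  define s where "s = sv s2 s3 m"
  have s_def': "s = (a2 + a3) mod \<sigma>" unfolding s_def sv_def a2_def a3_def \<sigma>_def by simp
  have s_rng: "0 \<le> s" "s < \<sigma>" unfolding s_def' using sgp by auto
  define x where "x = s mod X"
  define q where "q = s div X"
  define y where "y = q mod Y"
  define z where "z = q div Y"
  have x_rng: "0 \<le> x" "x < X" unfolding x_def using Xp by auto
  have y_rng: "0 \<le> y" "y < Y" unfolding y_def using Yp by auto
  have q_nn: "0 \<le> q" unfolding q_def using s_rng Xp by (simp add: pos_imp_zdiv_nonneg_iff)
  have z_nn: "0 \<le> z" unfolding z_def using q_nn Yp by (simp add: pos_imp_zdiv_nonneg_iff)
  have z_alt: "s div (X * Y) = z" unfolding z_def q_def using Yp by (simp add: zdiv_zmult2_eq)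
  have s_dec: "s = x + X * (y + Y * z)"
  proof -
    have "q = y + Y * z" unfolding y_def z_def by simp
    moreover have "s = x + X * q" unfolding x_def q_def by simp
    ultimately show ?thesis by simp
  qed
  have z_rng: "z < Z"
  proof (rule ccontr)
    assume "\<not> z < Z"
    then have "X * Y * Z \<le> X * Y * z" using Xp Yp by (simp add: mult_left_mono)
    also have "\<dots> \<le> s" using s_dec x_rng y_rng Xp by (simp add: algebra_simps)
    finally show False using s_rng condi by linarith
  qed
  define u1 where "u1 = (a1 + x) mod int s1"
  define u4 where "u4 = (a4 + x) mod int s4"
  have u_rng: "0 \<le> u1" "u1 < int s1" "0 \<le> u4" "u4 < int s4" unfolding u1_def u4_def using s1p s4p by auto
  have e1: "int (L 1) = 1 + u1 + int s1 * y"
    unfolding L1 enc1_def u1_def y_def q_def x_def s_def[symmetric] a1_def[symmetric] X_def[symmetric] Y_def[symmetric]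
    using u_rng y_rng s1p unfolding u1_def y_def q_def x_def by simp
  have e2: "int (L 2) = 1 + u4 + int s4 * z"
    unfolding L2 enc2_def u4_def s_def[symmetric] a4_def[symmetric] X_def[symmetric] Y_def[symmetric] z_alt
    unfolding x_def[symmetric]
    using u_rng z_nn s4p unfolding u4_def by simp
  have L1m: "(int (L 1) - 1) mod int s1 = u1" and L1d: "(int (L 1) - 1) div int s1 = y"
    using e1 u_rng s1p by auto
  have L2m: "(int (L 2) - 1) mod int s4 = u4" and L2d: "(int (L 2) - 1) div int s4 = z"
    using e2 u_rng s4p by auto
  have xs1: "(u1 - a1) mod int s1 = x" unfolding u1_def mod_sub_cancel using x_rng Xp by simp
  have xs4: "(u4 - a4) mod int s4 = x" unfolding u4_def mod_sub_cancel using x_rng Xp by simp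
  show "dec1 s1 s2 s3 s4 W L m = m 1"
  proof -
    have "(u1 - x) mod int s1 = a1" unfolding u1_def mod_sub_cancel2 using a_rng by simp
    then show ?thesis unfolding dec1_def L1m L2m a4_def[symmetric] xs4 using a1_def by simp
  qed
  show "dec4 s1 s2 s3 s4 W L m = m 4"
  proof -
    have "(u4 - x) mod int s4 = a4" unfolding u4_def mod_sub_cancel2 using a_rng by simp
    then show ?thesis unfolding dec4_def L2m s_def[symmetric] X_def[symmetric] x_def[symmetric] using a4_def by simp
  qed
  have rs: "rec_s s1 s2 s3 s4 W L (m 1) = s"
    unfolding rec_s_def L1m L1d L2d a1_def[symmetric] xs1 X_def[symmetric] Y_def[symmetric] using s_dec by simp
  show "dec2 s1 s2 s3 s4 W L m = m 2"
  proof -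
    have "(s - a3) mod \<sigma> = a2" unfolding s_def' mod_sub_cancel2 using a_rng sgp by simp
    then show ?thesis unfolding dec2_def rs a3_def[symmetric] \<sigma>_def[symmetric] using a2_def by simp
  qed
  show "dec3 s1 s2 s3 s4 W L m = m 3"
  proof -
    have "(s - a2) mod \<sigma> = a3" unfolding s_def' mod_sub_cancel using a_rng sgp by simp
    then show ?thesis unfolding dec3_def rs a2_def[symmetric] \<sigma>_def[symmetric] using a3_def by simp
  qed
  have "0 \<le> int s1 * y" "0 \<le> int s4 * z" using y_rng z_nn by simp_all
  then have "1 \<le> int (L 1)" "1 \<le> int (L 2)" using e1 e2 u_rng by linarith+
  then show "1 \<le> L 1" "1 \<le> L 2" by simp_all
  have W1: "int s1 * Y \<le> int W" unfolding Y_def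
    by (metis div_mult_self1_is_m mult.commute of_nat_le_iff of_nat_mult s1p times_div_less_eq_dividend)
  have W4: "int s4 * Z \<le> int W" unfolding Z_def
    by (metis mult.commute of_nat_le_iff of_nat_mult times_div_less_eq_dividend)
  have "int s1 * y \<le> int s1 * (Y - 1)" using y_rng s1p by (intro mult_left_mono) auto
  then have "int (L 1) \<le> int W" using e1 u_rng W1 by (simp add: algebra_simps)
  then show "L 1 \<le> W" by simp
  have "int s4 * z \<le> int s4 * (Z - 1)" using z_rng s4p by (intro mult_left_mono) auto
  then have "int (L 2) \<le> int W" using e2 u_rng W4 by (simp add: algebra_simps)
  then show "L 2 \<le> W" by simp
qed

definition cf :: "(nat \<Rightarrow> real) \<Rightarrow> nat \<Rightarrow> nat \<Rightarrow> (nat \<Rightarrow> nat) \<Rightarrow> nat" where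
  "cf R n k m = (if k = 1 then enc1 (msg_size n (R 1)) (msg_size n (R 2)) (msg_size n (R 3)) (msg_size n (R 4)) (2^n) m
                 else enc2 (msg_size n (R 1)) (msg_size n (R 2)) (msg_size n (R 3)) (msg_size n (R 4)) (2^n) m)"

definition cg :: "(nat \<Rightarrow> real) \<Rightarrow> nat \<Rightarrow> nat \<Rightarrow> (nat \<Rightarrow> nat) \<Rightarrow> (nat \<Rightarrow> nat) \<Rightarrow> nat" where
  "cg R n j L m = (if j = 1 then dec1 (msg_size n (R 1)) (msg_size n (R 2)) (msg_size n (R 3)) (msg_size n (R 4)) (2^n) L m
                 else if j = 2 then dec2 (msg_size n (R 1)) (msg_size n (R 2)) (msg_size n (R 3)) (msg_size n (R 4)) (2^n) L m
                 else if j = 3 then dec3 (msg_size n (R 1)) (msg_size n (R 2)) (msg_size n (R 3)) (msg_size n (R 4)) (2^n) L m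
                 else dec4 (msg_size n (R 1)) (msg_size n (R 2)) (msg_size n (R 3)) (msg_size n (R 4)) (2^n) L m)"

lemma code_good:
  assumes cond: "max (msg_size n (R 2)) (msg_size n (R 3)) \<le> min (msg_size n (R 1)) (msg_size n (R 4))
       * (2^n div msg_size n (R 1)) * (2^n div msg_size n (R 4))"
  shows "valid_code 4 2 S_ex A_ex C_ex R n (cf R n) (cg R n) \<and> err_prob 4 2 R n (cf R n) (cg R n) = 0"
proof -
  let ?M = "msg_space 4 R n"
  have mm: "\<And>m. m \<in> ?M \<Longrightarrow> 1 \<le> m 1 \<and> m 1 \<le> msg_size n (R 1)" "\<And>m. m \<in> ?M \<Longrightarrow> 1 \<le> m 2 \<and> m 2 \<le> msg_size n (R 2)"
     "\<And>m. m \<in> ?M \<Longrightarrow> 1 \<le> m 3 \<and> m 3 \<le> msg_size n (R 3)" "\<And>m. m \<in> ?M \<Longrightarrow> 1 \<le> m 4 \<and> m 4 \<le> msg_size n (R 4)"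
    by (rule msg_space_mem; simp)+
  note cc = code_correct[OF cond]
  have cc': "\<And>m (L::nat \<Rightarrow> nat). m \<in> ?M \<Longrightarrow> L 1 = cf R n 1 m \<Longrightarrow> L 2 = cf R n 2 m \<Longrightarrow>
     cg R n 1 L m = m 1 \<and> cg R n 2 L m = m 2 \<and> cg R n 3 L m = m 3 \<and> cg R n 4 L m = m 4 \<and>
     1 \<le> L 1 \<and> L 1 \<le> 2^n \<and> 1 \<le> L 2 \<and> L 2 \<le> 2^n"
  proof -
    fix m and L :: "nat \<Rightarrow> nat" assume mM: "m \<in> ?M" and L1: "L 1 = cf R n 1 m" and L2: "L 2 = cf R n 2 m"
    note r = mm(1)[OF mM] mm(2)[OF mM] mm(3)[OF mM] mm(4)[OF mM]
    have L1': "L 1 = enc1 (msg_size n (R 1)) (msg_size n (R 2)) (msg_size n (R 3)) (msg_size n (R 4)) (2^n) m"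
      using L1 unfolding cf_def by simp
    have L2': "L 2 = enc2 (msg_size n (R 1)) (msg_size n (R 2)) (msg_size n (R 3)) (msg_size n (R 4)) (2^n) m"
      using L2 unfolding cf_def by simp
    note c = cc[of m L, OF r(1)[THEN conjunct1] r(1)[THEN conjunct2] r(2)[THEN conjunct1] r(2)[THEN conjunct2]
       r(3)[THEN conjunct1] r(3)[THEN conjunct2] r(4)[THEN conjunct1] r(4)[THEN conjunct2] L1' L2']
    show "cg R n 1 L m = m 1 \<and> cg R n 2 L m = m 2 \<and> cg R n 3 L m = m 3 \<and> cg R n 4 L m = m 4 \<and>
     1 \<le> L 1 \<and> L 1 \<le> 2^n \<and> 1 \<le> L 2 \<and> L 2 \<le> 2^n"
      using c unfolding cg_def by simp
  qed
  have v1: "\<forall>k\<in>{1..2}. \<forall>m\<in>?M. cf R n k m \<in> {1..link_size n (C_ex k)}"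
  proof (intro ballI)
    fix k m assume k: "k \<in> {1..2::nat}" and mM: "m \<in> ?M"
    have "k = 1 \<or> k = 2" using k by auto
    then show "cf R n k m \<in> {1..link_size n (C_ex k)}"
      using cc'[OF mM, of "\<lambda>k. cf R n k m"] unfolding C_ex_def link_size_1 by auto
  qed
  have v2: "\<forall>k\<in>{1..2}. \<forall>m\<in>?M. \<forall>m'\<in>?M. (\<forall>i\<in>S_ex k. m i = m' i) \<longrightarrow> cf R n k m = cf R n k m'"
  proof (intro ballI impI)
    fix k :: nat and m m' :: "nat \<Rightarrow> nat" assume k: "k \<in> {1..2::nat}" and e: "\<forall>i\<in>S_ex k. m i = m' i"
    have "k = 1 \<or> k = 2" using k by auto
    then show "cf R n k m = cf R n k m'"
    proof
      assume k1: "k = 1"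
      then have "m 1 = m' 1" "m 2 = m' 2" "m 3 = m' 3" using e unfolding S_ex_def by auto
      then show ?thesis unfolding k1 cf_def enc1_def sv_def by simp
    next
      assume k2: "k = 2"
      then have "m 4 = m' 4" "m 2 = m' 2" "m 3 = m' 3" using e unfolding S_ex_def by auto
      then show ?thesis unfolding k2 cf_def enc2_def sv_def by simp
    qed
  qed
  have v3: "\<forall>j\<in>{1..4}. \<forall>L. \<forall>m\<in>?M. \<forall>m'\<in>?M. (\<forall>i\<in>A_ex j. m i = m' i) \<longrightarrow> cg R n j L m = cg R n j L m'"
  proof (intro ballI allI impI)
    fix j :: nat and L m m' :: "nat \<Rightarrow> nat" assume j: "j \<in> {1..4::nat}" and e: "\<forall>i\<in>A_ex j. m i = m' i"
    have "j = 1 \<or> j = 2 \<or> j = 3 \<or> j = 4" using j by auto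
    then show "cg R n j L m = cg R n j L m'"
    proof (elim disjE)
      assume j1: "j = 1"
      then have "m 4 = m' 4" using e unfolding A_ex_def by auto
      then show ?thesis unfolding j1 cg_def dec1_def by simp
    next
      assume j1: "j = 2"
      then have "m 1 = m' 1" "m 3 = m' 3" using e unfolding A_ex_def by auto
      then show ?thesis unfolding j1 cg_def dec2_def rec_s_def by simp
    next
      assume j1: "j = 3"
      then have "m 1 = m' 1" "m 2 = m' 2" using e unfolding A_ex_def by auto
      then show ?thesis unfolding j1 cg_def dec3_def rec_s_def by simp
    next
      assume j1: "j = 4"
      then have "m 2 = m' 2" "m 3 = m' 3" using e unfolding A_ex_def by auto
      then show ?thesis unfolding j1 cg_def dec4_def sv_def by simp
    qed
  qed
  have empty: "{m \<in> ?M. \<exists>j\<in>{1..4}. cg R n j (sent 2 (cf R n) m) m \<noteq> m j} = {}"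
  proof -
    have "cg R n j (sent 2 (cf R n) m) m = m j" if mM: "m \<in> ?M" and j: "j \<in> {1..4}" for m j
    proof -
      have s1: "sent 2 (cf R n) m 1 = cf R n 1 m" and s2: "sent 2 (cf R n) m 2 = cf R n 2 m"
        unfolding sent_def by simp_all
      have "j = 1 \<or> j = 2 \<or> j = 3 \<or> j = 4" using j by auto
      then show ?thesis using cc'[OF mM s1 s2] by auto
    qed
    then show ?thesis by blast
  qed
  have "valid_code 4 2 S_ex A_ex C_ex R n (cf R n) (cg R n)"
    unfolding valid_code_def using v1 v2 v3 by blast
  moreover have "err_prob 4 2 R n (cf R n) (cg R n) = 0"
    unfolding err_prob_def empty by simp
  ultimately show ?thesis by blast
qed

lemma trivial_code: "valid_code 4 2 S_ex A_ex C_ex R n (\<lambda>k m. 1) (\<lambda>j L m. 1) \<and> err_prob 4 2 R n (\<lambda>k m. 1) (\<lambda>j L m. 1) \<le> 1"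
proof -
  have "card {m \<in> msg_space 4 R n. \<exists>j\<in>{1..4}. (1::nat) \<noteq> m j} \<le> card (msg_space 4 R n)"
    by (intro card_mono msg_space_finite) auto
  moreover have "0 < card (msg_space 4 R n)" by (simp add: msg_space_card msg_size_pos)
  ultimately have "err_prob 4 2 R n (\<lambda>k m. 1) (\<lambda>j L m. 1) \<le> 1"
    unfolding err_prob_def by (simp add: divide_le_eq_1)
  moreover have "valid_code 4 2 S_ex A_ex C_ex R n (\<lambda>k m. 1) (\<lambda>j L m. 1)"
    unfolding valid_code_def link_size_def by simp
  ultimately show ?thesis by simp
qed

lemma dm_lt: "0 < s \<Longrightarrow> (W::nat) < s * (W div s) + s"
proof -
  assume s: "0 < s"
  have "W mod s < s" using s by simp
  moreover have "s * (W div s) + W mod s = W" by simp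
  ultimately show ?thesis by linarith
qed

lemma key:
  fixes sA sB q q' \<sigma> W :: nat and p pB ps E :: real
  assumes hA: "W < sA * q + sA" and hB: "W < sB * q' + sB"
    and sA: "real sA \<le> 2*p" and sB: "real sB \<le> 2*pB"
    and pE: "p*E \<le> real W" and pBE: "pB*E \<le> real W"
    and sg: "real \<sigma> \<le> 2*ps" and pp: "p*ps*E^2 \<le> real W ^ 2"
    and E: "16 \<le> E" and p1: "1 \<le> p" and ps0: "0 \<le> ps"
  shows "\<sigma> \<le> sB*q*q'"
proof -
  have pB0: "0 \<le> pB" using sB of_nat_0_le_iff[of sB] by linarith
  have "16 * p \<le> E * p" using E p1 by (intro mult_right_mono) auto
  then have sAW: "8 * real sA \<le> real W" using sA pE by (simp add: algebra_simps)
  have "16 * pB \<le> E * pB" using E pB0 by (intro mult_right_mono) auto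
  then have sBW: "8 * real sB \<le> real W" using sB pBE by (simp add: algebra_simps)
  have hA': "real W < real sA * real q + real sA" using hA by (metis of_nat_add of_nat_less_iff of_nat_mult)
  have hB': "real W < real sB * real q' + real sB" using hB by (metis of_nat_add of_nat_less_iff of_nat_mult)
  have A: "real W \<le> 2*(real sA * real q)" using hA' sAW by linarith
  have B: "real W \<le> 2*(real sB * real q')" using hB' sBW by linarith
  define X where "X = real sB * real q * real q'"
  have X0: "0 \<le> X" unfolding X_def by simp
  have "real W * real W \<le> (2*(real sA * real q)) * (2*(real sB * real q'))"
    using A B by (intro mult_mono) auto
  also have "\<dots> = 4 * real sA * X" unfolding X_def by (simp add: algebra_simps)
  also have "\<dots> \<le> 4 * (2*p) * X" using sA X0 by (intro mult_right_mono mult_left_mono) auto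
  finally have C: "real W ^ 2 \<le> 8 * p * X" by (simp add: power2_eq_square)
  have "p * (ps * E^2) \<le> p * (8 * X)" using pp C by (simp add: algebra_simps)
  then have D: "ps * E^2 \<le> 8 * X" using p1 by simp
  have "256 \<le> E^2" using E power_mono[of 16 E 2] by simp
  then have "ps * 256 \<le> ps * E^2" using ps0 by (intro mult_left_mono) auto
  then have "32 * ps \<le> X" using D by linarith
  then have "real \<sigma> \<le> X" using sg ps0 by linarith
  then show ?thesis unfolding X_def by (metis of_nat_le_iff of_nat_mult)
qed

lemma pw_mono: "a \<le> b \<Longrightarrow> 2 powr a \<le> 2 powr (b::real)"
  by (rule powr_mono) auto

lemma cond_holds:
  fixes \<rho> :: "nat \<Rightarrow> real" and t :: real
  assumes nn: "0 \<le> \<rho> 1" "0 \<le> \<rho> 2" "0 \<le> \<rho> 3" "0 \<le> \<rho> 4"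
    and c1: "\<rho> 1 \<le> t" and c4: "\<rho> 4 \<le> t"
    and c12: "\<rho> 1 + \<rho> 2 \<le> 2*t" and c13: "\<rho> 1 + \<rho> 3 \<le> 2*t"
    and c42: "\<rho> 4 + \<rho> 2 \<le> 2*t" and c43: "\<rho> 4 + \<rho> 3 \<le> 2*t"
    and nbig: "4 \<le> real n * (1 - t)"
  shows "max (msg_size n (\<rho> 2)) (msg_size n (\<rho> 3)) \<le> min (msg_size n (\<rho> 1)) (msg_size n (\<rho> 4))
       * (2^n div msg_size n (\<rho> 1)) * (2^n div msg_size n (\<rho> 4))"
proof -
  define s where "s = (\<lambda>j. msg_size n (\<rho> j))"
  define P where "P = (\<lambda>j. 2 powr (real n * \<rho> j))"
  define E where "E = 2 powr (real n * (1 - t))"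
  define W :: nat where "W = 2^n"
  have rW: "real W = 2 powr real n" unfolding W_def by (simp add: powr_realpow)
  have P1: "\<And>j. j \<in> {1,2,3,4} \<Longrightarrow> 1 \<le> P j" unfolding P_def using nn
    by (auto intro!: ge_one_powr_ge_zero)
  have sP: "real (s j) \<le> 2 * P j" if j: "j \<in> {1,2,3,4}" for j
    using msg_size_ub[of n "\<rho> j"] P1[OF j] unfolding P_def s_def by linarith
  have E16: "16 \<le> E" unfolding E_def using pw_mono[OF nbig] by simp
  have PE: "\<And>j. j \<in> {1,4} \<Longrightarrow> P j * E \<le> real W"
  proof -
    fix j assume j: "j \<in> {1::nat,4}"
    have "\<rho> j \<le> t" using j c1 c4 by auto
    then have "real n * \<rho> j \<le> real n * t" by (intro mult_left_mono) auto
    then have "real n * \<rho> j + real n * (1 - t) \<le> real n" by (simp add: algebra_simps)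
    then show "P j * E \<le> real W" unfolding P_def E_def rW powr_add[symmetric] by (rule pw_mono)
  qed
  have PPE: "\<And>j k. \<rho> j + \<rho> k \<le> 2*t \<Longrightarrow> P j * P k * E^2 \<le> real W ^ 2"
  proof -
    fix j k assume jk: "\<rho> j + \<rho> k \<le> 2*t"
    have "real n * (\<rho> j + \<rho> k) \<le> real n * (2*t)" using jk by (intro mult_left_mono) auto
    then have "real n * \<rho> j + real n * \<rho> k + 2 * (real n * (1 - t)) \<le> 2 * real n"
      by (simp add: algebra_simps)
    then have "2 powr (real n * \<rho> j + real n * \<rho> k + 2 * (real n * (1 - t))) \<le> 2 powr (2 * real n)"
      by (rule pw_mono)
    moreover have "2 powr (2 * real n) = real W ^ 2" unfolding rW
      by (simp add: power2_eq_square powr_add[symmetric])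
    moreover have "2 powr (real n * \<rho> j + real n * \<rho> k + 2 * (real n * (1 - t))) = P j * P k * E^2"
      unfolding P_def E_def by (simp add: power2_eq_square powr_add[symmetric] algebra_simps)
    ultimately show "P j * P k * E^2 \<le> real W ^ 2" by simp
  qed
  have sp: "\<And>j. 0 < s j" unfolding s_def by (simp add: msg_size_pos)
  have h: "\<And>j. W < s j * (W div s j) + s j" using sp by (intro dm_lt) 
  have P0: "\<And>j. 0 \<le> P j" unfolding P_def by simp
  have sig: "\<exists>k\<in>{2,3}. max (s 2) (s 3) = s k \<and> \<rho> 1 + \<rho> k \<le> 2*t \<and> \<rho> 4 + \<rho> k \<le> 2*t"
    using c12 c13 c42 c43 by (cases "s 3 \<le> s 2") (auto simp: max_def)
  then obtain k where k: "k \<in> {2,3}" "max (s 2) (s 3) = s k" "\<rho> 1 + \<rho> k \<le> 2*t" "\<rho> 4 + \<rho> k \<le> 2*t"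
    by blast
  have sk: "real (max (s 2) (s 3)) \<le> 2 * P k" using k sP by auto
  show ?thesis
  proof (cases "s 4 \<le> s 1")
    case True
    have "max (s 2) (s 3) \<le> s 4 * (W div s 1) * (W div s 4)"
      by (rule key[OF h[of 1] h[of 4] sP[of 1] sP[of 4] PE[of 1] PE[of 4] sk PPE[OF k(3)] E16 P1[of 1] P0]) auto
    moreover have "min (s 1) (s 4) = s 4" using True by (simp add: min_absorb2)
    ultimately have "max (s 2) (s 3) \<le> min (s 1) (s 4) * (W div s 1) * (W div s 4)" by simp
    then show ?thesis unfolding s_def W_def by simp
  next
    case False
    have "max (s 2) (s 3) \<le> s 1 * (W div s 4) * (W div s 1)"
      by (rule key[OF h[of 4] h[of 1] sP[of 4] sP[of 1] PE[of 4] PE[of 1] sk PPE[OF k(4)] E16 P1[of 4] P0]) auto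
    moreover have "min (s 1) (s 4) = s 1" using False by (simp add: min_absorb1)
    ultimately have "max (s 2) (s 3) \<le> min (s 1) (s 4) * (W div s 1) * (W div s 4)" by (simp add: mult_ac)
    then show ?thesis unfolding s_def W_def by simp
  qed
qed

lemma rate4_simps: "rate4 a b c d 1 = a" "rate4 a b c d 2 = b" "rate4 a b c d 3 = c" "rate4 a b c d 4 = d"
  "rate4 a b c d (Suc 0) = a"
  unfolding rate4_def by simp_all

lemma achievable_scaled:
  fixes t :: real
  assumes nn: "0 \<le> a" "0 \<le> b" "0 \<le> c" "0 \<le> d" and t1: "t < 1"
    and c1: "a \<le> t" and c4: "d \<le> t"
    and c12: "a + b \<le> 2*t" and c13: "a + c \<le> 2*t"
    and c42: "d + b \<le> 2*t" and c43: "d + c \<le> 2*t"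
  shows "achievable 4 2 S_ex A_ex C_ex (rate4 a b c d)"
proof -
  define R where "R = rate4 a b c d"
  define n0 where "n0 = nat \<lceil>4 / (1 - t)\<rceil>"
  define P :: "nat \<Rightarrow> real" where "P = (\<lambda>n. if n0 \<le> n then 0 else 1)"
  have P0: "P \<longlonglongrightarrow> 0"
  proof (rule tendsto_eventually)
    show "\<forall>\<^sub>F n in sequentially. P n = 0" unfolding P_def eventually_sequentially by auto
  qed
  have codes: "\<exists>f g. valid_code 4 2 S_ex A_ex C_ex R n f g \<and> err_prob 4 2 R n f g \<le> P n" for n
  proof (cases "n0 \<le> n")
    case True
    have "4 / (1 - t) \<le> real n" using True unfolding n0_def by linarith
    then have nbig: "4 \<le> real n * (1 - t)" using t1 by (simp add: divide_le_eq)
    have cond: "max (msg_size n (R 2)) (msg_size n (R 3)) \<le> min (msg_size n (R 1)) (msg_size n (R 4))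
       * (2^n div msg_size n (R 1)) * (2^n div msg_size n (R 4))"
      by (rule cond_holds[OF _ _ _ _ _ _ _ _ _ _ nbig]) (simp_all add: R_def rate4_simps nn c1 c4 c12 c13 c42 c43)
    have "P n = 0" using True unfolding P_def by simp
    then show ?thesis using code_good[OF cond] by (metis order_refl)
  next
    case False
    then have "P n = 1" unfolding P_def by simp
    then show ?thesis using trivial_code[of R n] by metis
  qed
  have nonneg: "\<forall>j\<in>{1..4}. 0 \<le> R j"
  proof
    fix j :: nat assume "j \<in> {1..4}"
    then have "j = 1 \<or> j = 2 \<or> j = 3 \<or> j = 4" by auto
    then show "0 \<le> R j" unfolding R_def using nn by (auto simp: rate4_simps)
  qed
  show ?thesis unfolding R_def[symmetric] achievable_def using nonneg P0 codes by blast
qed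

lemma converse:
  assumes ach: "achievable 4 2 S_ex A_ex C_ex (rate4 r1 r2 r3 r4)"
  shows "0 \<le> r1 \<and> 0 \<le> r2 \<and> 0 \<le> r3 \<and> 0 \<le> r4 \<and>
       r1 \<le> 1 \<and> r4 \<le> 1 \<and> r1 + r2 \<le> 2 \<and> r1 + r3 \<le> 2 \<and> r2 + r4 \<le> 2 \<and> r3 + r4 \<le> 2"
proof -
  let ?R = "rate4 r1 r2 r3 r4"
  have nn: "\<forall>j\<in>{1..4}. 0 \<le> ?R j" using ach unfolding achievable_def by blast
  have n1: "0 \<le> r1" using bspec[OF nn, of 1] by (simp add: rate4_simps)
  have n2: "0 \<le> r2" using bspec[OF nn, of 2] by (simp add: rate4_simps)
  have n3: "0 \<le> r3" using bspec[OF nn, of 3] by (simp add: rate4_simps)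
  have n4: "0 \<le> r4" using bspec[OF nn, of 4] by (simp add: rate4_simps)
  have a1: "r1 \<le> 1"
  proof (rule ccontr)
    assume "\<not> r1 \<le> 1"
    then show False using conv_final[OF ach conv1] by (simp add: rate4_simps)
  qed
  have a4: "r4 \<le> 1"
  proof (rule ccontr)
    assume "\<not> r4 \<le> 1"
    then show False using conv_final[OF ach conv4] by (simp add: rate4_simps)
  qed
  have a12: "r1 + r2 \<le> 2"
  proof (rule ccontr)
    assume "\<not> r1 + r2 \<le> 2"
    then show False using conv_final[OF ach conv12] by (simp add: rate4_simps)
  qed
  have a13: "r1 + r3 \<le> 2"
  proof (rule ccontr)
    assume "\<not> r1 + r3 \<le> 2"
    then show False using conv_final[OF ach conv13] by (simp add: rate4_simps)
  qed
  have a24: "r2 + r4 \<le> 2"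
  proof (rule ccontr)
    assume "\<not> r2 + r4 \<le> 2"
    then show False using conv_final[OF ach conv24] by (simp add: rate4_simps)
  qed
  have a34: "r3 + r4 \<le> 2"
  proof (rule ccontr)
    assume "\<not> r3 + r4 \<le> 2"
    then show False using conv_final[OF ach conv34] by (simp add: rate4_simps)
  qed
  show ?thesis using n1 n2 n3 n4 a1 a4 a12 a13 a24 a34 by blast
qed

lemma region_closed:
  "closed {(r1::real, r2::real, r3::real, r4::real). 0 \<le> r1 \<and> 0 \<le> r2 \<and> 0 \<le> r3 \<and> 0 \<le> r4 \<and>
       r1 \<le> 1 \<and> r4 \<le> 1 \<and> r1 + r2 \<le> 2 \<and> r1 + r3 \<le> 2 \<and> r2 + r4 \<le> 2 \<and> r3 + r4 \<le> 2}"
proof -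
  have e: "{(r1::real, r2::real, r3::real, r4::real). 0 \<le> r1 \<and> 0 \<le> r2 \<and> 0 \<le> r3 \<and> 0 \<le> r4 \<and>
       r1 \<le> 1 \<and> r4 \<le> 1 \<and> r1 + r2 \<le> 2 \<and> r1 + r3 \<le> 2 \<and> r2 + r4 \<le> 2 \<and> r3 + r4 \<le> 2} =
     {p. 0 \<le> fst p \<and> 0 \<le> fst (snd p) \<and> 0 \<le> fst (snd (snd p)) \<and> 0 \<le> snd (snd (snd p)) \<and>
       fst p \<le> 1 \<and> snd (snd (snd p)) \<le> 1 \<and> fst p + fst (snd p) \<le> 2 \<and> fst p + fst (snd (snd p)) \<le> 2 \<and>
       fst (snd p) + snd (snd (snd p)) \<le> 2 \<and> fst (snd (snd p)) + snd (snd (snd p)) \<le> 2}"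
    by auto
  show ?thesis unfolding e
    by (intro closed_Collect_conj closed_Collect_le continuous_intros)
qed

theorem mainTheorem3:
  shows "capacity_region_ex =
    {(r1, r2, r3, r4). 0 \<le> r1 \<and> 0 \<le> r2 \<and> 0 \<le> r3 \<and> 0 \<le> r4 \<and>
       r1 \<le> 1 \<and> r4 \<le> 1 \<and> r1 + r2 \<le> 2 \<and> r1 + r3 \<le> 2 \<and> r2 + r4 \<le> 2 \<and> r3 + r4 \<le> 2}"
  (is "_ = ?Reg")
proof -
  let ?Ach = "{(r1, r2, r3, r4). achievable 4 2 S_ex A_ex C_ex (rate4 r1 r2 r3 r4)}"
  have sub: "?Ach \<subseteq> ?Reg" using converse by auto
  have c1: "closure ?Ach \<subseteq> ?Reg" by (rule closure_minimal[OF sub region_closed])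
  have c2: "?Reg \<subseteq> closure ?Ach"
  proof
    fix p assume pR: "p \<in> ?Reg"
    obtain r1 r2 r3 r4 where p: "p = (r1, r2, r3, r4)" by (cases p) auto
    have r: "0 \<le> r1" "0 \<le> r2" "0 \<le> r3" "0 \<le> r4" "r1 \<le> 1" "r4 \<le> 1" "r1 + r2 \<le> 2" "r1 + r3 \<le> 2"
      "r2 + r4 \<le> 2" "r3 + r4 \<le> 2" using pR unfolding p by auto
    define t :: "nat \<Rightarrow> real" where "t = (\<lambda>k. 1 - inverse (real (Suc k)))"
    have t0: "0 \<le> t k" "t k < 1" for k
    proof -
      have "inverse (real (Suc k)) \<le> 1" by (simp add: inverse_le_1_iff)
      moreover have "0 < inverse (real (Suc k))" by simp
      ultimately show "0 \<le> t k" "t k < 1" unfolding t_def by linarith+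
    qed
    have tl: "t \<longlonglongrightarrow> 1"
    proof -
      have "(\<lambda>k. 1 - inverse (real (Suc k))) \<longlonglongrightarrow> 1 - 0"
        by (intro tendsto_diff tendsto_const LIMSEQ_inverse_real_of_nat)
      then show ?thesis unfolding t_def by simp
    qed
    define x where "x = (\<lambda>k. (t k * r1, t k * r2, t k * r3, t k * r4))"
    have xA: "x k \<in> ?Ach" for k
    proof -
      have m: "\<And>r. 0 \<le> r \<Longrightarrow> r \<le> 1 \<Longrightarrow> t k * r \<le> t k" using t0[of k]
        by (metis mult.right_neutral mult_left_mono)
      have m2: "\<And>r s. r + s \<le> 2 \<Longrightarrow> t k * r + t k * s \<le> 2 * t k"
      proof -
        fix r s :: real assume "r + s \<le> 2"
        then have "t k * (r + s) \<le> t k * 2" using t0[of k] by (intro mult_left_mono) auto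
        then show "t k * r + t k * s \<le> 2 * t k" by (simp add: algebra_simps)
      qed
      have "achievable 4 2 S_ex A_ex C_ex (rate4 (t k * r1) (t k * r2) (t k * r3) (t k * r4))"
        by (rule achievable_scaled) (use r t0[of k] m m2 in auto)
      then show ?thesis unfolding x_def by simp
    qed
    have xl: "x \<longlonglongrightarrow> p"
    proof -
      have "\<And>r. (\<lambda>k. t k * r) \<longlonglongrightarrow> 1 * r" by (intro tendsto_mult tl tendsto_const)
      then have "\<And>r. (\<lambda>k. t k * r) \<longlonglongrightarrow> r" by simp
      then show ?thesis unfolding x_def p by (intro tendsto_Pair)
    qed
    show "p \<in> closure ?Ach" unfolding closure_sequential using xA xl by blast
  qed
  show ?thesis unfolding capacity_region_ex_def using c1 c2 by blast
qed

end
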